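(* Let $j\in\mathbb{N}$ and $r\in\mathbb{N}_0$. Then \[c_j^{(r)}=\sum_{i=0}^{r}\binom{r}{i} c_{j+i}.\]
   Context: For $j,n\in\mathbb{N}$, $c_j(n)$ is the number of ordered $j$-tuples of integers each $\ge 2$ with product $n$. The associated divisor functions are defined by $c_j^{(0)}=c_j$ and $c_j^{(r)}(n)=\sum_{m\mid n}c_j^{(r-1)}(m)$ for $r,n\in\mathbb{N}$. *)

theory Defs
  imports Main
begin

text \<open>Tuples are represented as lists of length j (entries are naturals, since a product
  of integers \<ge> 2 is positive, entries of an integer tuple \<ge> 2 are naturals).\<close>
definition c :: "nat \<Rightarrow> nat \<Rightarrow> nat" where
  "c j n = card {xs :: nat list. length xs = j \<and> (\<forall>x\<in>set xs. 2 \<le> x) \<and> prod_list xs = n}"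

text \<open>Iterated divisor sums: c_r j n = c_j^{(r)}(n).\<close>
fun c_r :: "nat \<Rightarrow> nat \<Rightarrow> nat \<Rightarrow> nat" where
  "c_r 0 j n = c j n"
| "c_r (Suc r) j n = (\<Sum>m\<in>{m. m dvd n}. c_r r j m)"

end

theory Submission
  imports Defs
begin

definition S :: "nat \<Rightarrow> nat \<Rightarrow> nat list set" where
  "S j n = {xs :: nat list. length xs = j \<and> (\<forall>x\<in>set xs. 2 \<le> x) \<and> prod_list xs = n}"

lemma c_S: "c j n = card (S j n)" by (simp add: c_def S_def)

lemma dvd_prod_list_mem: "x \<in> set xs \<Longrightarrow> x dvd prod_list (xs::nat list)"
  by (induction xs) auto

lemma finite_S: assumes "n \<ge> 1" shows "finite (S j n)"
proof -
  have "S j n \<subseteq> {xs. set xs \<subseteq> {..n} \<and> length xs = j}"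
  proof
    fix xs assume "xs \<in> S j n"
    then have "\<forall>x\<in>set xs. x \<le> n" using assms
      by (auto simp: S_def intro!: dvd_imp_le dvd_prod_list_mem)
    with \<open>xs \<in> S j n\<close> show "xs \<in> {xs. set xs \<subseteq> {..n} \<and> length xs = j}"
      by (auto simp: S_def)
  qed
  moreover have "finite {xs. set xs \<subseteq> {..n} \<and> length xs = j}"
    by (rule finite_lists_length_eq) simp
  ultimately show ?thesis by (rule finite_subset)
qed

lemma S_Suc: assumes "n \<ge> 1"
  shows "S (Suc j) n = (\<Union>m\<in>{m. m dvd n \<and> m < n}. (\<lambda>ys. (n div m) # ys) ` S j m)"
proof (rule set_eqI, rule iffI)
  fix xs assume "xs \<in> S (Suc j) n"
  then obtain x ys where xs: "xs = x # ys" and "length ys = j" "2 \<le> x" "\<forall>y\<in>set ys. 2 \<le> y"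
    "x * prod_list ys = n"
    by (cases xs) (auto simp: S_def)
  then have "prod_list ys dvd n" "prod_list ys < n" using assms
  proof -
    have "prod_list ys > 0" using \<open>x * prod_list ys = n\<close> assms by (metis gr0I mult_0_right not_one_le_zero)
    then have "1 * prod_list ys < x * prod_list ys" using \<open>2 \<le> x\<close> by (intro mult_strict_right_mono) auto
    then show "prod_list ys < n" using \<open>x * prod_list ys = n\<close> by simp
    show "prod_list ys dvd n" using \<open>x * prod_list ys = n\<close> by (metis dvd_triv_right)
  qed
  moreover have "n div prod_list ys = x" using \<open>x * prod_list ys = n\<close> assms by auto
  ultimately show "xs \<in> (\<Union>m\<in>{m. m dvd n \<and> m < n}. (\<lambda>ys. (n div m) # ys) ` S j m)"
    using xs \<open>length ys = j\<close> \<open>\<forall>y\<in>set ys. 2 \<le> y\<close>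
    by (auto simp: S_def)
next
  fix xs assume "xs \<in> (\<Union>m\<in>{m. m dvd n \<and> m < n}. (\<lambda>ys. (n div m) # ys) ` S j m)"
  then obtain m ys where m: "m dvd n" "m < n" and ys: "ys \<in> S j m" and xs: "xs = (n div m) # ys"
    by auto
  from m assms have "m > 0" by (auto intro: Nat.gr0I)
  then obtain k where k: "n = m * k" using m by auto
  with m have "k \<ge> 2"
  proof -
    have "k \<noteq> 0" using k assms by (intro notI) simp
    moreover have "k \<noteq> 1" using k m(2) by (intro notI) simp
    ultimately show ?thesis by linarith
  qed
  have "n div m = k" using k \<open>m > 0\<close> by simp
  then show "xs \<in> S (Suc j) n" using ys xs k \<open>k \<ge> 2\<close> by (auto simp: S_def)
qed

lemma c_Suc: assumes "n \<ge> 1"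
  shows "c (Suc j) n = (\<Sum>m\<in>{m. m dvd n \<and> m < n}. c j m)"
proof -
  have fin: "finite {m. m dvd n \<and> m < n}" by simp
  have "card (S (Suc j) n) = (\<Sum>m\<in>{m. m dvd n \<and> m < n}. card ((\<lambda>ys. (n div m) # ys) ` S j m))"
    unfolding S_Suc[OF assms]
  proof (rule card_UN_disjoint[OF fin])
    show "\<forall>i\<in>{m. m dvd n \<and> m < n}. finite ((#) (n div i) ` S j i)"
    proof
      fix i assume "i \<in> {m. m dvd n \<and> m < n}"
      then have "i \<ge> 1" using assms by (metis One_nat_def dvd_0_left_iff less_one mem_Collect_eq not_le not_one_le_zero)
      then show "finite ((#) (n div i) ` S j i)" by (intro finite_imageI finite_S)
    qed
    show "\<forall>i\<in>{m. m dvd n \<and> m < n}. \<forall>ja\<in>{m. m dvd n \<and> m < n}. i \<noteq> ja \<longrightarrow>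
      (#) (n div i) ` S j i \<inter> (#) (n div ja) ` S j ja = {}"
      by (auto simp: S_def)
  qed
  also have "\<dots> = (\<Sum>m\<in>{m. m dvd n \<and> m < n}. card (S j m))"
    by (intro sum.cong refl card_image) (auto simp: inj_on_def)
  finally show ?thesis by (simp add: c_S)
qed

lemma sum_c: assumes "n \<ge> 1"
  shows "(\<Sum>m\<in>{m. m dvd n}. c j m) = c j n + c (Suc j) n"
proof -
  have "{m. m dvd n} = insert n {m. m dvd n \<and> m < n}"
    using assms by (auto dest: dvd_imp_le)
  moreover have "finite {m. m dvd n \<and> m < n}" by simp
  ultimately show ?thesis by (simp add: c_Suc[OF assms])
qed

lemma main: "n \<ge> 1 \<Longrightarrow> c_r r j n = (\<Sum>i=0..r. (r choose i) * c (j + i) n)"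
proof (induction r arbitrary: j n)
  case 0 then show ?case by simp
next
  case (Suc r)
  have "c_r (Suc r) j n = (\<Sum>m\<in>{m. m dvd n}. \<Sum>i=0..r. (r choose i) * c (j + i) m)"
    using Suc.IH Suc.prems by (auto intro!: sum.cong Nat.gr0I)
  also have "\<dots> = (\<Sum>i=0..r. (r choose i) * (\<Sum>m\<in>{m. m dvd n}. c (j + i) m))"
    by (subst sum.swap) (simp add: sum_distrib_left)
  also have "\<dots> = (\<Sum>i=0..r. (r choose i) * c (j + i) n) + (\<Sum>i=0..r. (r choose i) * c (j + Suc i) n)"
    using Suc.prems by (simp add: sum_c algebra_simps sum.distrib)
  also have "\<dots> = (\<Sum>i=0..Suc r. (Suc r choose i) * c (j + i) n)"
  proof -
    have "(\<Sum>i=0..Suc r. (Suc r choose i) * c (j + i) n)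
        = c j n + (\<Sum>i=0..r. (Suc r choose Suc i) * c (j + Suc i) n)"
      by (subst sum.atLeast0_atMost_Suc_shift) simp
    also have "\<dots> = c j n + (\<Sum>i=0..r. (r choose i) * c (j + Suc i) n)
        + (\<Sum>i=0..r. (r choose Suc i) * c (j + Suc i) n)"
      by (simp add: algebra_simps sum.distrib)
    also have "(\<Sum>i=0..r. (r choose Suc i) * c (j + Suc i) n) = (\<Sum>i=1..r. (r choose i) * c (j + i) n)"
    proof -
      have "(\<Sum>i=0..r. (r choose Suc i) * c (j + Suc i) n) = (\<Sum>i=Suc 0..Suc r. (r choose i) * c (j + i) n)"
        by (subst sum.shift_bounds_cl_Suc_ivl) simp
      also have "\<dots> = (\<Sum>i=1..r. (r choose i) * c (j + i) n)"
        by (simp add: sum.cl_ivl_Suc)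
      finally show ?thesis .
    qed
    also have "c j n + (\<Sum>i=1..r. (r choose i) * c (j + i) n) = (\<Sum>i=0..r. (r choose i) * c (j + i) n)"
      by (simp add: sum.atLeast_Suc_atMost[of 0 r, simplified])
    ultimately show ?thesis by simp
  qed
  finally show ?case .
qed

theorem lemma12:
  fixes j r n :: nat
  assumes "j \<ge> 1" and "n \<ge> 1"
  shows "c_r r j n = (\<Sum>i=0..r. (r choose i) * c (j + i) n)"
  using main[OF assms(2)] .

end
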